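(* Let $(\mathcal G,\lambda)$ be a small morphism-colored groupoid satisfying the inverse-compatibility condition. Then the relation $\overset{0}{\sim}$ on $I_0$ is an equivalence relation.
   Context: A morphism-colored category is a pair $(\mathcal C,\lambda)$ where $\mathcal C$ is a category and $\lambda$ assigns to each morphism $f$ a color $\lambda(f)$, such that: whenever $g,f_1,f_2$ with $(f_1,f_2)$ composable satisfy $\lambda(g)=\lambda(f_1\circ f_2)$, there exist composable $g_1,g_2$ with $g=g_1\circ g_2$, $\lambda(g_1)=\lambda(f_1)$, $\lambda(g_2)=\lambda(f_2)$. It is a morphism-colored groupoid if $\mathcal C$ is a groupoid, and small if $\mathcal C$ is small and $\lambda$ is a map into a set. Inverse-compatibility: $\lambda(f)=\lambda(g)$ implies $\lambda(f^{-1})=\lambda(g^{-1})$. $I_1=\lambda(\mathrm{Mor}(\mathcal G))$, $\lambda_1$ the corestriction of $\lambda$ to $I_1$; $I_0=\{\lambda(\mathrm{id}_x):x\in\mathrm{Obj}(\mathcal G)\}$, $\lambda_0(x)=\lambda(\mathrm{id}_x)$. The equivalence relation $\overset{1}{\sim}$ on $I_1$: $\lambda(f_1\circ\cdots\circ f_l)\overset{1}{\sim}\lambda(g_1\circ\cdots\circ g_l)$ for every $l\ge1$ and all composable sequences with $\lambda(f_i)=\lambda(g_i)$ for all $i$ (no other pairs); $s_1:I_1\to\bar I_1$ the quotient map. The relation $\overset{0}{\sim}$ on $I_0$: declare $\lambda_0(\mathrm{source}(f))\overset{0}{\sim}\lambda_0(\mathrm{source}(g))$ for all $f,g\in\mathrm{Mor}(\mathcal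 G)$ with $(s_1\circ\lambda_1)(f)=(s_1\circ\lambda_1)(g)$ (no other pairs). *)

theory Defs
  imports Main
begin

text \<open>A small category is given by a set of objects Obj, a set of morphisms Mor,
  source and target maps, a composition cmp (where cmp f g means f after g,
  defined when source f = target g) and identities ident.\<close>

definition is_category ::
  "'o set \<Rightarrow> 'm set \<Rightarrow> ('m \<Rightarrow> 'o) \<Rightarrow> ('m \<Rightarrow> 'o) \<Rightarrow> ('m \<Rightarrow> 'm \<Rightarrow> 'm) \<Rightarrow> ('o \<Rightarrow> 'm) \<Rightarrow> bool"
where
  "is_category Obj Mor src tgt cmp ident \<longleftrightarrow>
     (\<forall>f\<in>Mor. src f \<in> Obj \<and> tgt f \<in> Obj) \<and>
     (\<forall>x\<in>Obj. ident x \<in> Mor \<and> src (ident x) = x \<and> tgt (ident x) = x) \<and>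
     (\<forall>f\<in>Mor. \<forall>g\<in>Mor. src f = tgt g \<longrightarrow>
        cmp f g \<in> Mor \<and> src (cmp f g) = src g \<and> tgt (cmp f g) = tgt f) \<and>
     (\<forall>f\<in>Mor. \<forall>g\<in>Mor. \<forall>h\<in>Mor. src f = tgt g \<longrightarrow> src g = tgt h \<longrightarrow>
        cmp (cmp f g) h = cmp f (cmp g h)) \<and>
     (\<forall>f\<in>Mor. cmp f (ident (src f)) = f \<and> cmp (ident (tgt f)) f = f)"

definition is_inverse ::
  "'m set \<Rightarrow> ('m \<Rightarrow> 'o) \<Rightarrow> ('m \<Rightarrow> 'o) \<Rightarrow> ('m \<Rightarrow> 'm \<Rightarrow> 'm) \<Rightarrow> ('o \<Rightarrow> 'm) \<Rightarrow> 'm \<Rightarrow> 'm \<Rightarrow> bool"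
where
  "is_inverse Mor src tgt cmp ident f g \<longleftrightarrow>
     g \<in> Mor \<and> src g = tgt f \<and> tgt g = src f \<and>
     cmp f g = ident (tgt f) \<and> cmp g f = ident (src f)"

definition is_groupoid ::
  "'o set \<Rightarrow> 'm set \<Rightarrow> ('m \<Rightarrow> 'o) \<Rightarrow> ('m \<Rightarrow> 'o) \<Rightarrow> ('m \<Rightarrow> 'm \<Rightarrow> 'm) \<Rightarrow> ('o \<Rightarrow> 'm) \<Rightarrow> bool"
where
  "is_groupoid Obj Mor src tgt cmp ident \<longleftrightarrow>
     is_category Obj Mor src tgt cmp ident \<and>
     (\<forall>f\<in>Mor. \<exists>g. is_inverse Mor src tgt cmp ident f g)"

text \<open>The inverse f^{-1} of a morphism (unique in a groupoid).\<close>
definition grpd_inv ::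
  "'m set \<Rightarrow> ('m \<Rightarrow> 'o) \<Rightarrow> ('m \<Rightarrow> 'o) \<Rightarrow> ('m \<Rightarrow> 'm \<Rightarrow> 'm) \<Rightarrow> ('o \<Rightarrow> 'm) \<Rightarrow> 'm \<Rightarrow> 'm"
where
  "grpd_inv Mor src tgt cmp ident f = (THE g. is_inverse Mor src tgt cmp ident f g)"

definition morphism_colored ::
  "'m set \<Rightarrow> ('m \<Rightarrow> 'o) \<Rightarrow> ('m \<Rightarrow> 'o) \<Rightarrow> ('m \<Rightarrow> 'm \<Rightarrow> 'm) \<Rightarrow> ('m \<Rightarrow> 'c) \<Rightarrow> bool"
where
  "morphism_colored Mor src tgt cmp lam \<longleftrightarrow>
     (\<forall>g\<in>Mor. \<forall>f1\<in>Mor. \<forall>f2\<in>Mor. src f1 = tgt f2 \<longrightarrow> lam g = lam (cmp f1 f2) \<longrightarrow>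
        (\<exists>g1\<in>Mor. \<exists>g2\<in>Mor. src g1 = tgt g2 \<and> g = cmp g1 g2 \<and>
            lam g1 = lam f1 \<and> lam g2 = lam f2))"

definition inverse_compatible ::
  "'m set \<Rightarrow> ('m \<Rightarrow> 'o) \<Rightarrow> ('m \<Rightarrow> 'o) \<Rightarrow> ('m \<Rightarrow> 'm \<Rightarrow> 'm) \<Rightarrow> ('o \<Rightarrow> 'm) \<Rightarrow> ('m \<Rightarrow> 'c) \<Rightarrow> bool"
where
  "inverse_compatible Mor src tgt cmp ident lam \<longleftrightarrow>
     (\<forall>f\<in>Mor. \<forall>g\<in>Mor. lam f = lam g \<longrightarrow>
        lam (grpd_inv Mor src tgt cmp ident f) = lam (grpd_inv Mor src tgt cmp ident g))"

fun cmp_list :: "('m \<Rightarrow> 'm \<Rightarrow> 'm) \<Rightarrow> 'm list \<Rightarrow> 'm" where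
  "cmp_list cmp [] = undefined"
| "cmp_list cmp [f] = f"
| "cmp_list cmp (f # g # fs) = cmp f (cmp_list cmp (g # fs))"

definition composable_seq :: "'m set \<Rightarrow> ('m \<Rightarrow> 'o) \<Rightarrow> ('m \<Rightarrow> 'o) \<Rightarrow> 'm list \<Rightarrow> bool" where
  "composable_seq Mor src tgt fs \<longleftrightarrow>
     fs \<noteq> [] \<and> set fs \<subseteq> Mor \<and>
     (\<forall>i. Suc i < length fs \<longrightarrow> src (fs ! i) = tgt (fs ! Suc i))"

definition I1 :: "'m set \<Rightarrow> ('m \<Rightarrow> 'c) \<Rightarrow> 'c set" where
  "I1 Mor lam = lam ` Mor"

definition I0 :: "'o set \<Rightarrow> ('o \<Rightarrow> 'm) \<Rightarrow> ('m \<Rightarrow> 'c) \<Rightarrow> 'c set" where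
  "I0 Obj ident lam = {lam (ident x) | x. x \<in> Obj}"

text \<open>The relation ~1 on I1 (exactly the listed pairs).\<close>
definition rel1 ::
  "'m set \<Rightarrow> ('m \<Rightarrow> 'o) \<Rightarrow> ('m \<Rightarrow> 'o) \<Rightarrow> ('m \<Rightarrow> 'm \<Rightarrow> 'm) \<Rightarrow> ('m \<Rightarrow> 'c) \<Rightarrow> 'c rel"
where
  "rel1 Mor src tgt cmp lam =
     {(lam (cmp_list cmp fs), lam (cmp_list cmp gs)) | fs gs.
        composable_seq Mor src tgt fs \<and> composable_seq Mor src tgt gs \<and>
        length fs = length gs \<and> (\<forall>i < length fs. lam (fs ! i) = lam (gs ! i))}"

definition s1 ::
  "'m set \<Rightarrow> ('m \<Rightarrow> 'o) \<Rightarrow> ('m \<Rightarrow> 'o) \<Rightarrow> ('m \<Rightarrow> 'm \<Rightarrow> 'm) \<Rightarrow> ('m \<Rightarrow> 'c) \<Rightarrow> 'c \<Rightarrow> 'c set"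
where
  "s1 Mor src tgt cmp lam x = rel1 Mor src tgt cmp lam `` {x}"

text \<open>The relation ~0 on I0 (exactly the listed pairs).\<close>
definition rel0 ::
  "'m set \<Rightarrow> ('m \<Rightarrow> 'o) \<Rightarrow> ('m \<Rightarrow> 'o) \<Rightarrow> ('m \<Rightarrow> 'm \<Rightarrow> 'm) \<Rightarrow> ('o \<Rightarrow> 'm) \<Rightarrow> ('m \<Rightarrow> 'c) \<Rightarrow> 'c rel"
where
  "rel0 Mor src tgt cmp ident lam =
     {(lam (ident (src f)), lam (ident (src g))) | f g.
        f \<in> Mor \<and> g \<in> Mor \<and>
        s1 Mor src tgt cmp lam (lam f) = s1 Mor src tgt cmp lam (lam g)}"

end

theory Submission
  imports Defs
begin

lemma composable_tail:
  "composable_seq Mor src tgt (f # g # fs) \<Longrightarrow> composable_seq Mor src tgt (g # fs)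
   \<and> f \<in> Mor \<and> src f = tgt g"
  unfolding composable_seq_def
  by (auto simp del: length_Cons)

lemma cmp_list_mor:
  assumes cat: "is_category Obj Mor src tgt cmp ident"
  shows "composable_seq Mor src tgt fs \<Longrightarrow>
     cmp_list cmp fs \<in> Mor \<and> tgt (cmp_list cmp fs) = tgt (hd fs)"
proof (induction fs rule: induct_list012)
  case 1 then show ?case by (simp add: composable_seq_def)
next
  case (2 f) then show ?case by (simp add: composable_seq_def)
next
  case (3 f g fs)
  have a: "f \<in> Mor" "src f = tgt g" "cmp_list cmp (g # fs) \<in> Mor" "tgt (cmp_list cmp (g # fs)) = tgt g"
    using composable_tail[OF 3(3)] 3(2) by auto
  then show ?case using cat unfolding is_category_def by simp
qed

lemma decomp_last:
  assumes cat: "is_category Obj Mor src tgt cmp ident"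
    and col: "morphism_colored Mor src tgt cmp lam"
  shows "composable_seq Mor src tgt fs \<Longrightarrow> h \<in> Mor \<Longrightarrow> lam h = lam (cmp_list cmp fs) \<Longrightarrow>
     \<exists>h'\<in>Mor. lam h' = lam (last fs) \<and> src h' = src h"
proof (induction fs arbitrary: h rule: induct_list012)
  case 1 then show ?case by (simp add: composable_seq_def)
next
  case (2 f) then show ?case by auto
next
  case (3 f g fs)
  note ct = composable_tail[OF 3(3)]
  have m: "cmp_list cmp (g # fs) \<in> Mor" "tgt (cmp_list cmp (g # fs)) = tgt g"
    using cmp_list_mor[OF cat ct[THEN conjunct1]] by auto
  have e: "lam h = lam (cmp f (cmp_list cmp (g # fs)))" using 3(5) by simp
  from col[unfolded morphism_colored_def, rule_format, OF 3(4) _ m(1) _ e] ct m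
  obtain g1 g2 where g: "g1 \<in> Mor" "g2 \<in> Mor" "src g1 = tgt g2"
    "h = cmp g1 g2" "lam g2 = lam (cmp_list cmp (g # fs))" by auto
  have "src h = src g2" using cat g unfolding is_category_def by auto
  with 3(2)[OF ct[THEN conjunct1] g(2) g(5)] show ?case by auto
qed

theorem mainTheorem7:
  fixes Obj :: "'o set" and Mor :: "'m set"
    and src tgt :: "'m \<Rightarrow> 'o" and cmp :: "'m \<Rightarrow> 'm \<Rightarrow> 'm"
    and ident :: "'o \<Rightarrow> 'm" and lam :: "'m \<Rightarrow> 'c"
  assumes "is_groupoid Obj Mor src tgt cmp ident"
    and "morphism_colored Mor src tgt cmp lam"
    and "inverse_compatible Mor src tgt cmp ident lam"
  shows "equiv (I0 Obj ident lam) (rel0 Mor src tgt cmp ident lam)"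
proof -
  have cat: "is_category Obj Mor src tgt cmp ident"
    using assms(1) unfolding is_groupoid_def by auto
  note col = assms(2)
  let ?R = "{(lam (ident (src p)), lam (ident (src q))) | p q. p \<in> Mor \<and> q \<in> Mor \<and> lam p = lam q}"
  have eq: "rel0 Mor src tgt cmp ident lam = ?R"
  proof
    show "?R \<subseteq> rel0 Mor src tgt cmp ident lam"
    proof
      fix z assume "z \<in> ?R"
      then obtain p q where "p \<in> Mor" "q \<in> Mor" "lam p = lam q" "z = (lam (ident (src p)), lam (ident (src q)))" by auto
      then show "z \<in> rel0 Mor src tgt cmp ident lam" unfolding rel0_def
        by (intro CollectI exI[of _ p] exI[of _ q]) auto
    qed
  next
    show "rel0 Mor src tgt cmp ident lam \<subseteq> ?R"
    proof
      fix z assume "z \<in> rel0 Mor src tgt cmp ident lam"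
      then obtain f g where z: "z = (lam (ident (src f)), lam (ident (src g)))"
        "f \<in> Mor" "g \<in> Mor" "s1 Mor src tgt cmp lam (lam f) = s1 Mor src tgt cmp lam (lam g)"
        unfolding rel0_def by auto
      have "(lam g, lam g) \<in> rel1 Mor src tgt cmp lam"
        unfolding rel1_def
        by (rule CollectI, rule exI[of _ "[g]"], rule exI[of _ "[g]"])
           (simp add: composable_seq_def z(3))
      then have "lam g \<in> s1 Mor src tgt cmp lam (lam f)" using z(4) unfolding s1_def by auto
      then obtain fs gs where r: "lam f = lam (cmp_list cmp fs)" "lam g = lam (cmp_list cmp gs)"
        "composable_seq Mor src tgt fs" "composable_seq Mor src tgt gs" "length fs = length gs"
        "\<forall>i<length fs. lam (fs ! i) = lam (gs ! i)"
        unfolding s1_def rel1_def by auto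
      obtain f1 where f1: "f1 \<in> Mor" "lam f1 = lam (last fs)" "src f1 = src f"
        using decomp_last[OF cat col r(3) z(2) r(1)] by auto
      obtain g1 where g1: "g1 \<in> Mor" "lam g1 = lam (last gs)" "src g1 = src g"
        using decomp_last[OF cat col r(4) z(3) r(2)] by auto
      have ne: "fs \<noteq> []" "gs \<noteq> []" using r(3,4) unfolding composable_seq_def by auto
      have "lam (last fs) = lam (last gs)"
        using r(5,6) ne by (simp add: last_conv_nth)
      then have "lam f1 = lam g1" using f1 g1 by simp
      then show "z \<in> ?R" using f1 g1 z(1) by (intro CollectI exI[of _ f1] exI[of _ g1]) auto
    qed
  qed
  have key: "\<exists>r s. r \<in> Mor \<and> s \<in> Mor \<and> lam r = lam s \<and> src r = src p \<and> src s = src q'"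
    if "p \<in> Mor" "q \<in> Mor" "p' \<in> Mor" "q' \<in> Mor" "lam p = lam q" "lam p' = lam q'"
      "lam (ident (src q)) = lam (ident (src p'))" for p q p' q'
  proof -
    note T = that
    have q: "ident (src q) \<in> Mor" "src q = tgt (ident (src q))" "cmp q (ident (src q)) = q"
      "src (ident (src q)) = src q"
      using cat that unfolding is_category_def by auto
    obtain h1 h2 where h: "h2 \<in> Mor" "src h1 = tgt h2" "p = cmp h1 h2" "h1 \<in> Mor"
      "lam h2 = lam (ident (src q))"
    proof -
      have "lam p = lam (cmp q (ident (src q)))" using q T by simp
      from col[unfolded morphism_colored_def, rule_format, OF T(1) T(2) q(1) q(2) this]
      show ?thesis using that by blast
    qed
    have p': "ident (src p') \<in> Mor" "src p' = tgt (ident (src p'))" "cmp p' (ident (src p')) = p'"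
      using cat that unfolding is_category_def by auto
    obtain g1 g2 where g: "g2 \<in> Mor" "src g1 = tgt g2" "q' = cmp g1 g2" "g1 \<in> Mor"
      "lam g2 = lam (ident (src p'))"
    proof -
      have "lam q' = lam (cmp p' (ident (src p')))" using p' T by simp
      from col[unfolded morphism_colored_def, rule_format, OF T(4) T(3) p'(1) p'(2) this]
      show ?thesis using that by blast
    qed
    have "src p = src h2" "src q' = src g2" using cat h g unfolding is_category_def by auto
    then show ?thesis using h g T by (intro exI[of _ h2] exI[of _ g2]) auto
  qed
  show ?thesis unfolding eq equiv_def refl_on_def sym_def trans_def
  proof (intro conjI)
    show "?R \<subseteq> I0 Obj ident lam \<times> I0 Obj ident lam"
    proof
      fix z assume "z \<in> ?R"
      then obtain p q where "p \<in> Mor" "q \<in> Mor" "z = (lam (ident (src p)), lam (ident (src q)))" by auto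
      moreover have "src p \<in> Obj" "src q \<in> Obj" using cat \<open>p \<in> Mor\<close> \<open>q \<in> Mor\<close>
        unfolding is_category_def by auto
      ultimately show "z \<in> I0 Obj ident lam \<times> I0 Obj ident lam" unfolding I0_def by auto
    qed
    show "\<forall>x\<in>I0 Obj ident lam. (x, x) \<in> ?R"
    proof
      fix x assume "x \<in> I0 Obj ident lam"
      then obtain o1 where "x = lam (ident o1)" "o1 \<in> Obj" unfolding I0_def by auto
      moreover have "ident o1 \<in> Mor" "src (ident o1) = o1" using cat \<open>o1 \<in> Obj\<close>
        unfolding is_category_def by auto
      ultimately show "(x, x) \<in> ?R" by (intro CollectI exI[of _ "ident o1"]) auto
    qed
    show "\<forall>x y. (x, y) \<in> ?R \<longrightarrow> (y, x) \<in> ?R"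
    proof (intro allI impI)
      fix x y assume "(x, y) \<in> ?R"
      then obtain p q where "p \<in> Mor" "q \<in> Mor" "lam p = lam q"
        "x = lam (ident (src p))" "y = lam (ident (src q))" by auto
      then show "(y, x) \<in> ?R" by (intro CollectI exI[of _ q] exI[of _ p]) auto
    qed
    show "\<forall>x y z. (x, y) \<in> ?R \<longrightarrow> (y, z) \<in> ?R \<longrightarrow> (x, z) \<in> ?R"
    proof (intro allI impI)
      fix x y z assume "(x, y) \<in> ?R" "(y, z) \<in> ?R"
      then obtain p q p' q' where "p \<in> Mor" "q \<in> Mor" "p' \<in> Mor" "q' \<in> Mor" "lam p = lam q"
        "lam p' = lam q'" "x = lam (ident (src p))" "y = lam (ident (src q))"
        "y = lam (ident (src p'))" "z = lam (ident (src q'))" by auto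
      moreover from key[of p q p' q'] this obtain r s where "r \<in> Mor" "s \<in> Mor" "lam r = lam s"
        "src r = src p" "src s = src q'" by auto
      ultimately show "(x, z) \<in> ?R" by (intro CollectI exI[of _ r] exI[of _ s]) auto
    qed
  qed
qed

end
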